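(* Let $\mathcal{K}=\{1,\ldots,K\}$ be a set of users, and for each $k\in\mathcal{K}$ let $\gamma_k:\mathbb{R}_{>0}^K\to\mathbb{R}_{>0}$ be the uplink SINDR of user $k$ as a function of the transmit power vector $\boldsymbol{\rho}=[\rho_1,\ldots,\rho_K]^{\mathrm{T}}$, for fixed receivers. Suppose there exist power vectors $\boldsymbol{\rho}\succeq\boldsymbol{\rho}'$ (componentwise $\ge$, with $\boldsymbol{\rho}'$ having positive entries) such that $\gamma_k(\boldsymbol{\rho})<\gamma_k(\boldsymbol{\rho}')$ for all $k\in\mathcal{K}$. Then the transmit powers are in the quantization-distortion-dominated region of the non-monotonic SINDR, i.e., the SINDR functions cannot be of the unquantized form $\gamma_k(\boldsymbol{\rho})=G_k(\rho_k)/I_k(\boldsymbol{\rho})$ with $G_k(\rho_k)=g_k\rho_k$ ($g_k>0$) and $I_k$ a standard interference function; equivalently, for any such unquantized-form SINR functions and any $\boldsymbol{\rho}\succeq\boldsymbol{\rho}'$ there is at least one $k$ with $\gamma_k(\boldsymbol{\rho})\ge\gamma_k(\boldsymbol{\rho}')$.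
   Context: A standard interference function $I:\mathbb{R}_{\ge 0}^K\to\mathbb{R}_{>0}$ (Yates) satisfies positivity $I(\boldsymbol{\rho})>0$, monotonicity ($\boldsymbol{\rho}\succeq\boldsymbol{\rho}'\Rightarrow I(\boldsymbol{\rho})\ge I(\boldsymbol{\rho}')$) and scalability ($a>1\Rightarrow aI(\boldsymbol{\rho})>I(a\boldsymbol{\rho})$). In an unquantized system with fixed receivers, the SINR of user $k$ has the form (signal power linear in $\rho_k$)/(interference-plus-noise given by a standard interference function). The SINDR of user $k$ is called non-monotonic due to quantization distortion (QD), produced by 1-bit ADCs at the receivers, if for fixed interference and noise there is $\rho_k>\rho_k'$ with $\gamma_k(\rho_k)<\gamma_k(\rho_k')$; the "QD-dominated region" refers to transmit powers where the SINDR exhibits such non-monotonic behavior, which cannot occur for unquantized-form SINRs. *)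

theory Defs
  imports Complex_Main
begin

text \<open>Power vectors are functions from a finite user index type 'k to real.
  Yates' standard interference function on the nonnegative orthant.\<close>

definition standard_interference :: "(('k \<Rightarrow> real) \<Rightarrow> real) \<Rightarrow> bool" where
  "standard_interference I \<longleftrightarrow>
     (\<forall>\<rho>. (\<forall>j. 0 \<le> \<rho> j) \<longrightarrow> 0 < I \<rho>) \<and>
     (\<forall>\<rho> \<rho>'. (\<forall>j. 0 \<le> \<rho>' j) \<and> (\<forall>j. \<rho>' j \<le> \<rho> j) \<longrightarrow> I \<rho>' \<le> I \<rho>) \<and>
     (\<forall>\<rho> (a::real). (\<forall>j. 0 \<le> \<rho> j) \<and> 1 < a \<longrightarrow> I (\<lambda>j. a * \<rho> j) < a * I \<rho>)"

definition unquantized_sinr ::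
  "('k \<Rightarrow> real) \<Rightarrow> ('k \<Rightarrow> ('k \<Rightarrow> real) \<Rightarrow> real) \<Rightarrow> 'k \<Rightarrow> ('k \<Rightarrow> real) \<Rightarrow> real" where
  "unquantized_sinr g I k \<rho> = g k * \<rho> k / I k \<rho>"

end

theory Submission
  imports Defs
begin

theorem theorem1:
  fixes g :: "'k::finite \<Rightarrow> real"
    and I :: "'k \<Rightarrow> ('k \<Rightarrow> real) \<Rightarrow> real"
    and \<rho> \<rho>' :: "'k \<Rightarrow> real"
  assumes "\<And>k. 0 < g k"
    and "\<And>k. standard_interference (I k)"
    and "\<And>k. 0 < \<rho>' k"
    and "\<And>k. \<rho>' k \<le> \<rho> k"
  shows "\<exists>k. unquantized_sinr g I k \<rho>' \<le> unquantized_sinr g I k \<rho>"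
proof -
  define r where "r = (\<lambda>j. \<rho> j / \<rho>' j)"
  define a where "a = Max (range r)"
  have "a \<in> range r" unfolding a_def by (rule Max_in) auto
  then obtain k where ak: "a = r k" by auto
  have rle: "r j \<le> a" for j unfolding a_def by (rule Max_ge) auto
  have a1: "1 \<le> a" using ak assms(3,4)[of k] by (simp add: r_def)
  have bound: "\<rho> j \<le> a * \<rho>' j" for j
    using rle[of j] assms(3)[of j] by (simp add: r_def pos_divide_le_eq)
  have rk: "\<rho> k = a * \<rho>' k" using ak assms(3)[of k] by (simp add: r_def)
  have SI: "standard_interference (I k)" by (rule assms(2))
  have nn': "\<forall>j. 0 \<le> \<rho>' j" using assms(3) less_imp_le by blast
  have nn: "\<forall>j. 0 \<le> \<rho> j" using assms(3,4) by (meson less_le_trans less_imp_le)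
  have pos: "0 < I k \<rho>" "0 < I k \<rho>'" using SI nn nn' unfolding standard_interference_def by auto
  have m: "I k \<rho> \<le> I k (\<lambda>j. a * \<rho>' j)"
    using SI nn bound unfolding standard_interference_def by auto
  have s: "I k (\<lambda>j. a * \<rho>' j) \<le> a * I k \<rho>'"
  proof (cases "a = 1")
    case True then show ?thesis by simp
  next
    case False then have "1 < a" using a1 by simp
    then show ?thesis using SI nn' unfolding standard_interference_def
      by (meson less_imp_le)
  qed
  have Ile: "I k \<rho> \<le> a * I k \<rho>'" using m s by linarith
  have "g k * \<rho>' k / I k \<rho>' = g k * (a * \<rho>' k) / (a * I k \<rho>')"
    using a1 by simp
  also have "\<dots> \<le> g k * (a * \<rho>' k) / I k \<rho>"
    apply (rule divide_left_mono[OF Ile])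
    using assms(1)[of k] assms(3)[of k] a1 pos by auto
  finally show ?thesis unfolding unquantized_sinr_def using rk by (intro exI[of _ k]) simp
qed

end
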